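(* Let $A,A'\in\mathbb{C}^{n\times n}$ with $\|A\|_F=\|A'\|_F=1$, $\lambda,\lambda'\in\mathbb{C}$ and $v\in\mathbb{C}^n$ nonzero. If $\mu(A,\lambda,v)\big(\|A'-A\|_F+|\lambda'-\lambda|\big)\le\varepsilon<1$, then $(1-\varepsilon)\mu(A,\lambda,v)\le\mu(A',\lambda',v)\le\frac{1}{1-\varepsilon}\mu(A,\lambda,v)$.
   Context: $\|\cdot\|_F$ is the Frobenius norm. For $v\ne0$, $T_v=v^\perp\subset\mathbb{C}^n$, $P_{v^\perp}$ the orthogonal projection onto $T_v$, $A_{\lambda,v}=P_{v^\perp}(A-\lambda\mathrm{Id})|_{T_v}$, and $\mu(A,\lambda,v)=\|A\|_F\|A_{\lambda,v}^{-1}\|$ (operator norm; $\infty$ if not invertible). No eigen-relation between $A,\lambda,v$ is assumed. *)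

theory Defs
  imports "HOL-Analysis.Analysis"
begin

definition frob_norm :: "complex^'n^'n \<Rightarrow> real" where
  "frob_norm A = sqrt (\<Sum>i\<in>UNIV. \<Sum>j\<in>UNIV. (cmod (A$i$j))\<^sup>2)"

definition hinner :: "complex^'n \<Rightarrow> complex^'n \<Rightarrow> complex" where
  "hinner x y = (\<Sum>i\<in>UNIV. cnj (x$i) * y$i)"

definition orth_comp :: "complex^'n \<Rightarrow> (complex^'n) set" where
  "orth_comp v = {x. hinner v x = 0}"

definition proj_perp :: "complex^'n \<Rightarrow> complex^'n \<Rightarrow> complex^'n" where
  "proj_perp v x = x - (hinner v x / hinner v v) *s v"

(* A_{lambda,v} = P_{v^perp} (A - lambda Id), considered on T_v *)
definition A_lv :: "complex^'n^'n \<Rightarrow> complex \<Rightarrow> complex^'n \<Rightarrow> complex^'n \<Rightarrow> complex^'n" where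
  "A_lv A l v x = proj_perp v (A *v x - l *s x)"

definition op_norm_on :: "(complex^'n) set \<Rightarrow> (complex^'n \<Rightarrow> complex^'n) \<Rightarrow> real" where
  "op_norm_on S g = Sup {norm (g y) | y. y \<in> S \<and> norm y \<le> 1}"

definition mu :: "complex^'n^'n \<Rightarrow> complex \<Rightarrow> complex^'n \<Rightarrow> ereal" where
  "mu A l v = (if bij_betw (A_lv A l v) (orth_comp v) (orth_comp v)
     then ereal (frob_norm A * op_norm_on (orth_comp v) (inv_into (orth_comp v) (A_lv A l v)))
     else \<infinity>)"

end

theory Submission imports Defs begin

lemma inner_hinner: "inner x y = Re (hinner x y)"
  by (simp add: hinner_def inner_vec_def inner_complex_def Re_sum)

lemma hinner_add2: "hinner v (x + y) = hinner v x + hinner v y"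
  by (simp add: hinner_def distrib_left sum.distrib)
lemma hinner_diff2: "hinner v (x - y) = hinner v x - hinner v y"
  by (simp add: hinner_def right_diff_distrib sum_subtractf)
lemma scaleR_vec: "r *\<^sub>R (x::complex^'n) = complex_of_real r *s x"
  by (rule vec_eq_iff[THEN iffD2], rule allI, subst vector_scaleR_component, simp add: scaleR_conv_of_real)
lemma hinner_smult2: "hinner v (c *s x) = c * hinner v x"
  by (simp add: hinner_def sum_distrib_left mult.left_commute)
lemma hinner_scaleR2: "hinner v (r *\<^sub>R x) = of_real r * hinner v x"
  by (simp add: scaleR_vec hinner_smult2)
lemma hinner_zero2[simp]: "hinner v 0 = 0"
  by (simp add: hinner_def)
lemma hinner_smult1: "hinner (c *s v) x = cnj c * hinner v x"
  by (simp add: hinner_def sum_distrib_left mult.assoc)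

lemma hinner_self_nz: "v \<noteq> 0 \<Longrightarrow> hinner v v \<noteq> 0"
  using inner_hinner[of v v] by (metis inner_eq_zero_iff zero_complex.sel(1))

lemma proj_orth: "v \<noteq> 0 \<Longrightarrow> hinner v (proj_perp v x) = 0"
  using hinner_self_nz[of v]
  by (simp add: proj_perp_def hinner_diff2 hinner_smult2)

lemma proj_norm: assumes "v \<noteq> 0" shows "norm (proj_perp v x) \<le> norm x"
proof -
  define c where "c = hinner v x / hinner v v"
  have x: "x = proj_perp v x + c *s v" by (simp add: proj_perp_def c_def)
  have "inner (proj_perp v x) (c *s v) = 0"
    using proj_orth[OF assms, of x] hinner_smult1[of c v "proj_perp v x"]
    by (subst inner_commute) (simp add: inner_hinner)
  hence "(norm x)\<^sup>2 = (norm (proj_perp v x))\<^sup>2 + (norm (c *s v))\<^sup>2"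
    using norm_add_Pythagorean[of "proj_perp v x" "c *s v"] x
    by (metis orthogonal_def)
  hence "(norm (proj_perp v x))\<^sup>2 \<le> (norm x)\<^sup>2" by simp
  thus ?thesis by (simp add: power2_le_iff_abs_le)
qed

lemma proj_diff: "proj_perp v (x - y) = proj_perp v x - proj_perp v y"
  by (simp add: proj_perp_def hinner_diff2 vec_eq_iff diff_divide_distrib algebra_simps)

lemma proj_in: "v \<noteq> 0 \<Longrightarrow> proj_perp v x \<in> orth_comp v"
  using proj_orth by (simp add: orth_comp_def)

lemma subspace_orth: "subspace (orth_comp v)"
  by (auto simp: subspace_def orth_comp_def hinner_add2 hinner_scaleR2)

lemma linear_proj: "linear (proj_perp v)"
  by (rule linearI) (simp_all add: proj_perp_def hinner_add2 hinner_smult2 scaleR_vec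
      vec_eq_iff add_divide_distrib algebra_simps)

lemma linear_mv: "linear (\<lambda>x. (A::complex^'n^'n) *v x - l *s x)"
  by (rule linearI) (simp_all add: scaleR_vec vec_eq_iff matrix_vector_mult_def sum.distrib
      sum_distrib_left algebra_simps)

lemma linear_A_lv: "linear (A_lv A l v)"
proof -
  have "A_lv A l v = proj_perp v \<circ> (\<lambda>x. A *v x - l *s x)" by (simp add: A_lv_def fun_eq_iff)
  thus ?thesis using linear_compose[OF linear_mv linear_proj] by simp
qed

lemma frob_L2: "frob_norm C = L2_set (\<lambda>i. L2_set (\<lambda>j. cmod (C$i$j)) UNIV) UNIV"
  by (simp add: frob_norm_def L2_set_def sum_nonneg)

lemma mv_norm: "norm ((C::complex^'n^'n) *v y) \<le> frob_norm C * norm y"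
proof -
  have row: "cmod ((C *v y)$i) \<le> L2_set (\<lambda>j. cmod (C$i$j)) UNIV * norm y" for i
  proof -
    have "cmod ((C *v y)$i) = cmod (\<Sum>j\<in>UNIV. C$i$j * y$j)"
      by (simp add: matrix_vector_mult_def)
    also have "\<dots> \<le> (\<Sum>j\<in>UNIV. \<bar>cmod (C$i$j)\<bar> * \<bar>cmod (y$j)\<bar>)"
      by (rule order_trans[OF norm_sum]) (simp add: norm_mult)
    also have "\<dots> \<le> L2_set (\<lambda>j. cmod (C$i$j)) UNIV * L2_set (\<lambda>j. cmod (y$j)) UNIV"
      by (rule L2_set_mult_ineq)
    finally show ?thesis by (simp add: norm_vec_def)
  qed
  have "norm (C *v y) = L2_set (\<lambda>i. cmod ((C *v y)$i)) UNIV" by (simp add: norm_vec_def)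
  also have "\<dots> \<le> L2_set (\<lambda>i. L2_set (\<lambda>j. cmod (C$i$j)) UNIV * norm y) UNIV"
    by (rule L2_set_mono) (use row in auto)
  also have "\<dots> = frob_norm C * norm y"
    by (simp add: frob_L2 L2_set_left_distrib)
  finally show ?thesis .
qed

locale opn_setup =
  fixes T :: "(complex^'n) set" and g :: "complex^'n \<Rightarrow> complex^'n"
  assumes lin: "linear g" and sub: "subspace T" and bij: "bij_betw g T T"
begin

lemma inj: "inj_on g T" using bij bij_betw_def by blast

lemma bdd: "bdd_above {norm (inv_into T g y) | y. y \<in> T \<and> norm y \<le> 1}"
proof -
  have "span T = T" using sub by (rule span_eq_iff[THEN iffD2])
  hence "inj_on g (span T)" using inj by (simp only:)
  then obtain k where k: "linear k" "\<forall>x\<in>span T. k (g x) = x"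
    using linear_inj_on_left_inverse[OF lin, of T] by auto
  obtain K where K: "\<forall>x. norm (k x) \<le> K * norm x" using linear_bounded[OF k(1)] by blast
  have "norm (inv_into T g y) \<le> max K 0" if "y \<in> T" "norm y \<le> 1" for y
  proof -
    obtain x where x: "x \<in> T" "y = g x" 
    proof -
      have "y \<in> g ` T" using bij \<open>y \<in> T\<close> by (simp add: bij_betw_def)
      thus ?thesis using that by blast
    qed
    have "inv_into T g y = x" unfolding x(2) by (rule inv_into_f_f[OF inj x(1)])
    also have "\<dots> = k y" unfolding x(2) using k(2) span_base[OF x(1)] by simp
    finally have "norm (inv_into T g y) \<le> K * norm y" using K by simp
    also have "\<dots> \<le> max K 0"
    proof (cases "K \<ge> 0")
      case True thus ?thesis using that(2) by (simp add: mult_left_le)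
    next
      case False thus ?thesis by (simp add: mult_nonpos_nonneg)
    qed
    finally show ?thesis .
  qed
  thus ?thesis unfolding bdd_above_def by blast
qed

lemma nonneg: "0 \<le> op_norm_on T (inv_into T g)"
proof -
  have "norm (inv_into T g 0) \<le> op_norm_on T (inv_into T g)"
    unfolding op_norm_on_def using sub by (intro cSup_upper[OF _ bdd]) (auto simp: subspace_0)
  thus ?thesis using norm_ge_zero[of "inv_into T g 0"] by linarith
qed

lemma lower: assumes "y \<in> T" shows "norm y \<le> op_norm_on T (inv_into T g) * norm (g y)"
proof (cases "g y = 0")
  case True
  have "g 0 = 0" using lin by (rule linear_0)
  moreover have "(0::complex^'n) \<in> T" using sub by (rule subspace_0)
  ultimately have "y = 0" using True inj assms unfolding inj_on_def by metis
  thus ?thesis using nonneg by (simp add: linear_0[OF lin])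
next
  case False
  define c where "c = 1 / norm (g y)"
  have c: "c > 0" using False by (simp add: c_def)
  have gyT: "g y \<in> T" using bij assms bij_betwE by blast
  have zT: "c *\<^sub>R g y \<in> T" using sub gyT subspace_scale by blast
  have cyT: "c *\<^sub>R y \<in> T" using sub assms subspace_scale by blast
  have nz: "norm (c *\<^sub>R g y) \<le> 1" using False by (simp add: c_def)
  have "inv_into T g (c *\<^sub>R g y) = c *\<^sub>R y"
  proof -
    have "g (c *\<^sub>R y) = c *\<^sub>R g y" using lin by (rule linear_scale)
    thus ?thesis using inj cyT inv_into_f_f by metis
  qed
  hence "norm (c *\<^sub>R y) \<le> op_norm_on T (inv_into T g)"
    unfolding op_norm_on_def proof (intro cSup_upper[OF _ bdd])
    show "norm (c *\<^sub>R y) \<in> {norm (inv_into T g y) |y. y \<in> T \<and> norm y \<le> 1}"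
      using zT nz \<open>inv_into T g (c *\<^sub>R g y) = c *\<^sub>R y\<close> by (intro CollectI exI[of _ "c *\<^sub>R g y"]) simp
  qed
  hence "c * norm y \<le> op_norm_on T (inv_into T g)" using c by simp
  thus ?thesis using False by (simp add: c_def field_simps)
qed

lemma upper: assumes "0 \<le> C" "\<And>y. y \<in> T \<Longrightarrow> norm y \<le> C * norm (g y)"
  shows "op_norm_on T (inv_into T g) \<le> C"
  unfolding op_norm_on_def
proof (rule cSup_least)
  show "{norm (inv_into T g y) |y. y \<in> T \<and> norm y \<le> 1} \<noteq> {}"
    using sub subspace_0 by fastforce
next
  fix r assume "r \<in> {norm (inv_into T g y) |y. y \<in> T \<and> norm y \<le> 1}"
  then obtain y where y: "y \<in> T" "norm y \<le> 1" "r = norm (inv_into T g y)" by blast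
  have xT: "inv_into T g y \<in> T" using bij y(1) by (metis bij_betw_def inv_into_into)
  have "g (inv_into T g y) = y" using bij y(1) by (metis bij_betw_def f_inv_into_f)
  hence "r \<le> C * norm y" using assms(2)[OF xT] y(3) by simp
  also have "\<dots> \<le> C" using assms(1) y(2) by (simp add: mult_left_le)
  finally show "r \<le> C" .
qed

end


lemma perturb:
  fixes T :: "(complex^'n) set" and g g' :: "complex^'n \<Rightarrow> complex^'n"
  assumes lin: "linear g" and lin': "linear g'" and sub: "subspace T" and bij: "bij_betw g T T"
    and img': "g' ` T \<subseteq> T" and d: "0 \<le> d"
    and close: "\<And>y. y \<in> T \<Longrightarrow> norm (g' y - g y) \<le> d * norm y"
    and Md: "op_norm_on T (inv_into T g) * d \<le> e" and e1: "e < 1"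
  shows "bij_betw g' T T \<and>
     (1 - e) * op_norm_on T (inv_into T g) \<le> op_norm_on T (inv_into T g') \<and>
     op_norm_on T (inv_into T g') \<le> op_norm_on T (inv_into T g) / (1 - e)"
proof -
  interpret G: opn_setup T g by (rule opn_setup.intro[OF lin sub bij])
  define M where "M = op_norm_on T (inv_into T g)"
  have M0: "0 \<le> M" using G.nonneg M_def by simp
  have e0: "0 \<le> e" using Md M0 d unfolding M_def[symmetric] by (meson mult_nonneg_nonneg order_trans)
  have tri: "norm (g y) \<le> norm (g' y) + d * norm y" if "y \<in> T" for y
    using close[OF that] norm_triangle_ineq2[of "g y" "g' y"] norm_minus_commute[of "g y" "g' y"] by linarith
  have key: "(1 - e) * norm y \<le> M * norm (g' y)" if yT: "y \<in> T" for y
  proof -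
    have "norm y \<le> M * norm (g y)" using G.lower[OF yT] M_def by simp
    also have "\<dots> \<le> M * (norm (g' y) + d * norm y)" using tri[OF yT] M0 by (rule mult_left_mono)
    also have "\<dots> = M * norm (g' y) + (M * d) * norm y" by (simp add: algebra_simps)
    also have "\<dots> \<le> M * norm (g' y) + e * norm y" using Md M_def by (simp add: mult_right_mono)
    finally show ?thesis by (simp add: algebra_simps)
  qed
  have inj': "inj_on g' T"
  proof -
    have "\<forall>x\<in>T. g' x = 0 \<longrightarrow> x = 0"
    proof (intro ballI impI)
      fix x assume "x \<in> T" "g' x = 0"
      hence "(1 - e) * norm x \<le> 0" using key by fastforce
      thus "x = 0" using e1 by (simp add: mult_le_0_iff)
    qed
    thus ?thesis using linear_inj_on_iff_eq_0[OF lin' sub] by simp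
  qed
  have surj': "g' ` T = T"
  proof (rule subspace_dim_equal)
    show "subspace (g' ` T)" by (rule linear_subspace_image[OF lin' sub])
    show "g' ` T \<subseteq> T" by (rule img')
    have "span T = T" using sub by (rule span_eq_iff[THEN iffD2])
    hence "inj_on g' (span T)" using inj' by (simp only:)
    thus "dim T \<le> dim (g' ` T)" using dim_image_eq[OF lin'] by simp
    show "subspace T" by (rule sub)
  qed
  have bij': "bij_betw g' T T" using inj' surj' by (simp add: bij_betw_def)
  interpret G': opn_setup T g' by (rule opn_setup.intro[OF lin' sub bij'])
  define M' where "M' = op_norm_on T (inv_into T g')"
  have M'0: "0 \<le> M'" using G'.nonneg M'_def by simp
  have up: "M' \<le> M / (1 - e)"
    unfolding M'_def
  proof (rule G'.upper)
    show "0 \<le> M / (1 - e)" using M0 e1 by simp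
    fix y assume "y \<in> T"
    thus "norm y \<le> M / (1 - e) * norm (g' y)" using key[of y] e1 by (simp add: field_simps)
  qed
  have "M \<le> M' * (1 + e)"
    unfolding M_def
  proof (rule G.upper)
    show "0 \<le> M' * (1 + e)" using M'0 e0 by simp
    fix y assume yT: "y \<in> T"
    have a: "norm y \<le> M * norm (g y)" using G.lower[OF yT] M_def by simp
    have "norm (g' y) \<le> norm (g y) + d * norm y"
      using close[OF yT] norm_triangle_ineq2[of "g' y" "g y"] by linarith
    moreover have "d * norm y \<le> e * norm (g y)"
    proof -
      have "d * norm y \<le> d * (M * norm (g y))" using a d by (rule mult_left_mono)
      also have "\<dots> = (M * d) * norm (g y)" by simp
      also have "\<dots> \<le> e * norm (g y)" using Md M_def by (simp add: mult_right_mono)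
      finally show ?thesis .
    qed
    ultimately have b: "norm (g' y) \<le> (1 + e) * norm (g y)" by (simp add: algebra_simps)
    have "norm y \<le> M' * norm (g' y)" using G'.lower[OF yT] M'_def by simp
    also have "\<dots> \<le> M' * ((1 + e) * norm (g y))" using b M'0 by (rule mult_left_mono)
    finally show "norm y \<le> M' * (1 + e) * norm (g y)" by (simp add: mult.assoc)
  qed
  hence "(1 - e) * M \<le> (1 - e) * (M' * (1 + e))" using e1 by (simp add: mult_left_mono)
  also have "\<dots> = M' - e * e * M'" by (simp add: algebra_simps)
  also have "\<dots> \<le> M'" using M'0 e0 by simp
  finally have low: "(1 - e) * M \<le> M'" .
  show ?thesis using bij' low up M_def M'_def by simp
qed


lemma norm_smult_vec: "norm (c *s (y::complex^'n)) = cmod c * norm y"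
  by (simp add: norm_vec_def norm_mult L2_set_right_distrib)

lemma close_lv:
  assumes "v \<noteq> 0"
  shows "norm (A_lv A' l' v y - A_lv A l v y) \<le> (frob_norm (A' - A) + cmod (l' - l)) * norm y"
proof -
  have "A_lv A' l' v y - A_lv A l v y = proj_perp v ((A' - A) *v y - (l' - l) *s y)"
    unfolding A_lv_def proj_diff[symmetric]
    by (simp add: matrix_vector_mult_diff_rdistrib algebra_simps vec_eq_iff)
  hence "norm (A_lv A' l' v y - A_lv A l v y) \<le> norm ((A' - A) *v y - (l' - l) *s y)"
    using proj_norm[OF assms] by simp
  also have "\<dots> \<le> norm ((A' - A) *v y) + norm ((l' - l) *s y)" by (rule norm_triangle_ineq4)
  also have "\<dots> \<le> frob_norm (A' - A) * norm y + cmod (l' - l) * norm y"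
    using mv_norm[of "A' - A" y] norm_smult_vec[of "l' - l" y] by linarith
  finally show ?thesis by (simp add: algebra_simps)
qed

theorem lemma4p3:
  fixes A A' :: "complex^'n^'n" and l l' :: complex and v :: "complex^'n" and \<epsilon> :: real
  assumes "frob_norm A = 1" and "frob_norm A' = 1"
    and "v \<noteq> 0"
    and "mu A l v * ereal (frob_norm (A' - A) + cmod (l' - l)) \<le> ereal \<epsilon>"
    and "\<epsilon> < 1"
  shows "ereal (1 - \<epsilon>) * mu A l v \<le> mu A' l' v \<and> mu A' l' v \<le> ereal (1 / (1 - \<epsilon>)) * mu A l v"
proof -
  define d where "d = frob_norm (A' - A) + cmod (l' - l)"
  define T where "T = orth_comp v"
  have d0: "0 \<le> d" unfolding d_def frob_norm_def by (simp add: sum_nonneg)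
  have close: "\<And>y. y \<in> T \<Longrightarrow> norm (A_lv A' l' v y - A_lv A l v y) \<le> d * norm y"
    using close_lv[OF assms(3)] d_def by blast
  have img': "A_lv A' l' v ` T \<subseteq> T" using proj_in[OF assms(3)] by (auto simp: T_def A_lv_def)
  show ?thesis
  proof (cases "bij_betw (A_lv A l v) T T")
    case True
    define M where "M = op_norm_on T (inv_into T (A_lv A l v))"
    have muA: "mu A l v = ereal M" using True assms(1) by (simp add: mu_def M_def T_def)
    have Md: "M * d \<le> \<epsilon>" using assms(4) unfolding muA d_def[symmetric] by simp
    have P: "bij_betw (A_lv A' l' v) T T \<and>
     (1 - \<epsilon>) * M \<le> op_norm_on T (inv_into T (A_lv A' l' v)) \<and>
     op_norm_on T (inv_into T (A_lv A' l' v)) \<le> M / (1 - \<epsilon>)"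
      unfolding M_def
      by (rule perturb[OF linear_A_lv linear_A_lv _ True img' d0 close]) 
         (use subspace_orth Md assms(5) in \<open>auto simp: T_def M_def\<close>)
    have muA': "mu A' l' v = ereal (op_norm_on T (inv_into T (A_lv A' l' v)))"
      using P assms(2) by (simp add: mu_def T_def)
    show ?thesis using P unfolding muA muA' by simp
  next
    case False
    have muA: "mu A l v = \<infinity>" using False by (simp add: mu_def T_def)
    have "d = 0"
    proof (rule ccontr)
      assume "d \<noteq> 0"
      hence "d > 0" using d0 by simp
      thus False using assms(4) unfolding muA d_def[symmetric] by simp
    qed
    have eq: "\<And>y. y \<in> T \<Longrightarrow> A_lv A' l' v y = A_lv A l v y" using close \<open>d = 0\<close> by fastforce
    have "\<not> bij_betw (A_lv A' l' v) T T" using False bij_betw_cong[of T "A_lv A' l' v" "A_lv A l v" T] eq by blast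
    hence muA': "mu A' l' v = \<infinity>" by (simp add: mu_def T_def)
    have "1 / (1 - \<epsilon>) > 0" using assms(5) by simp
    thus ?thesis unfolding muA muA' by simp
  qed
qed

end
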